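(* Let $\mathcal{K}_{w,F}$ be an oriented folded ribbon knot. At a fold with fold angle $0<\theta<\pi$, there are two intersection points between the ribbon's boundary and the knot diagram, and both contribute the same sign to the ribbon linking number, namely: left underfold $+1$; left overfold $-1$; right underfold $-1$; right overfold $+1$.
   Context: For a polygonal knot diagram $\mathcal{K}$ and width $w>0$, the folded ribbon knot $\mathcal{K}_{w,F}$ is a flat strip of width $w$ centred on $\mathcal{K}$ (boundary parallel to and at distance $w/2$ from each edge), folded at each vertex along a fold line through the vertex perpendicular to the bisector of the angle between the adjacent edges; formally a piecewise-linear immersion of an annulus or Möbius band whose only singularities are pairwise disjoint fold lines, with consistent crossing information. The fold angle at a vertex is the angle in $[0,\pi]$ between the two adjacent edges. With $\mathcal{K}$ oriented, at vertex $v_i$ with incoming edge $e_{i-1}$ and outgoing edge $e_i$, the fold is a left (resp. right) fold if $e_i$ turns left (resp. right) of $e_{i-1}$; it is an underfold if the layer of ribbon along $e_i$ lies beneath the layer along $e_{i-1}$ in the fold, an overfold otherwise. The boundary of the ribbon is oriented parallel to $\mathcal{K}$, crossings between the knot diagram and the boundary are signed $\pm1$ by the right-hand rule, and the ribbon linking number is the linking number of the knot diagram with one boundary component of the ribbon (one half the sum of the crossing signs with that component). *)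

theory Defs
  imports "HOL-Analysis.Analysis"
begin

text \<open>Local model of a single fold of a folded ribbon knot.  The fold vertex is v, the incoming edge
  e_(i-1) has unit direction d1 (it arrives at v), the outgoing edge e_i has
  unit direction d2 (it leaves v).\<close>

definition cross :: "complex \<Rightarrow> complex \<Rightarrow> real" where
  "cross a b = Im (cnj a * b)"

text \<open>Fold angle: the angle in [0,pi] between the two edges at v, which emanate
  from v in the directions -d1 and d2.\<close>
definition fold_angle :: "complex \<Rightarrow> complex \<Rightarrow> real" where
  "fold_angle d1 d2 = arccos ((- d1) \<bullet> d2)"

text \<open>Left fold: e_i turns left of e_(i-1); right fold: it turns right.\<close>
definition left_fold :: "complex \<Rightarrow> complex \<Rightarrow> bool" where
  "left_fold d1 d2 \<longleftrightarrow> cross d1 d2 > 0"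

definition right_fold :: "complex \<Rightarrow> complex \<Rightarrow> bool" where
  "right_fold d1 d2 \<longleftrightarrow> cross d1 d2 < 0"

definition in_edge :: "complex \<Rightarrow> complex \<Rightarrow> complex set" where
  "in_edge v d1 = {v - complex_of_real t * d1 | t. t \<ge> 0}"

definition out_edge :: "complex \<Rightarrow> complex \<Rightarrow> complex set" where
  "out_edge v d2 = {v + complex_of_real t * d2 | t. t \<ge> 0}"

text \<open>Fold line: through v, perpendicular to the bisector (direction d2 - d1)
  of the angle between the edges.  Both ribbon layers lie on the closed side
  of the fold line containing the two edges.\<close>
definition fold_line :: "complex \<Rightarrow> complex \<Rightarrow> complex \<Rightarrow> complex set" where
  "fold_line v d1 d2 = {x. (x - v) \<bullet> (d2 - d1) = 0}"

definition ribbon_side :: "complex \<Rightarrow> complex \<Rightarrow> complex \<Rightarrow> complex set" where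
  "ribbon_side v d1 d2 = {x. (x - v) \<bullet> (d2 - d1) \<ge> 0}"

text \<open>Line parallel to direction d through v, at signed distance off to the
  left (off > 0) or right (off < 0).\<close>
definition parallel_line :: "complex \<Rightarrow> complex \<Rightarrow> real \<Rightarrow> complex set" where
  "parallel_line v d off = {v + complex_of_real s * d + complex_of_real off * \<i> * d | s. True}"

datatype layer = InLayer | OutLayer

text \<open>Pieces of the ribbon boundary near the fold: the two boundary lines of
  the strip along each edge, cut off at the fold line; each piece is oriented
  parallel to its edge and lies in that edge's layer.\<close>
definition fold_boundary_pieces ::
  "complex \<Rightarrow> complex \<Rightarrow> complex \<Rightarrow> real \<Rightarrow> (complex set \<times> complex \<times> layer) set" where
  "fold_boundary_pieces v d1 d2 w =
     {(parallel_line v d1 (w/2) \<inter> ribbon_side v d1 d2, d1, InLayer),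
      (parallel_line v d1 (-w/2) \<inter> ribbon_side v d1 d2, d1, InLayer),
      (parallel_line v d2 (w/2) \<inter> ribbon_side v d1 d2, d2, OutLayer),
      (parallel_line v d2 (-w/2) \<inter> ribbon_side v d1 d2, d2, OutLayer)}"

definition fold_knot_pieces ::
  "complex \<Rightarrow> complex \<Rightarrow> complex \<Rightarrow> (complex set \<times> complex \<times> layer) set" where
  "fold_knot_pieces v d1 d2 = {(in_edge v d1, d1, InLayer), (out_edge v d2, d2, OutLayer)}"

text \<open>Layer order: in an underfold the layer along e_i (OutLayer) lies beneath
  the layer along e_(i-1) (InLayer); in an overfold it lies above.\<close>
definition layer_above :: "bool \<Rightarrow> layer \<Rightarrow> layer \<Rightarrow> bool" where
  "layer_above underfold l1 l2 \<longleftrightarrow>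
     (underfold \<and> l1 = InLayer \<and> l2 = OutLayer) \<or>
     (\<not> underfold \<and> l1 = OutLayer \<and> l2 = InLayer)"

text \<open>Right-hand rule: a crossing is positive iff the under strand points to
  the left of the over strand.\<close>
definition crossing_sign :: "complex \<Rightarrow> complex \<Rightarrow> real" where
  "crossing_sign over_dir under_dir = sgn (cross over_dir under_dir)"

definition fold_intersections :: "complex \<Rightarrow> complex \<Rightarrow> complex \<Rightarrow> real \<Rightarrow> complex set" where
  "fold_intersections v d1 d2 w =
     {p. \<exists>B db lb K dk lk. (B, db, lb) \<in> fold_boundary_pieces v d1 d2 w \<and>
          (K, dk, lk) \<in> fold_knot_pieces v d1 d2 \<and> p \<in> B \<and> p \<in> K}"

definition fold_crossings ::
  "complex \<Rightarrow> complex \<Rightarrow> complex \<Rightarrow> real \<Rightarrow> bool \<Rightarrow> (complex \<times> real) set" where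
  "fold_crossings v d1 d2 w underfold =
     {(p, s). \<exists>B db lb K dk lk. (B, db, lb) \<in> fold_boundary_pieces v d1 d2 w \<and>
          (K, dk, lk) \<in> fold_knot_pieces v d1 d2 \<and> p \<in> B \<and> p \<in> K \<and>
          s = (if layer_above underfold lb lk then crossing_sign db dk
               else crossing_sign dk db)}"

end

theory Submission
  imports Defs
begin

lemma unit_cnj: "norm (d::complex) = 1 \<Longrightarrow> cnj d * d = 1"
  by (metis complex_norm_square mult.commute of_real_1 power_one)

lemma meet:
  assumes "norm d = 1"
    and "v + complex_of_real s * d + complex_of_real r * \<i> * d = v + complex_of_real t * d'"
  shows "r = t * cross d d'"
proof -
  have "cnj d * (complex_of_real s * d + complex_of_real r * \<i> * d) = cnj d * (complex_of_real t * d')"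
    using assms(2) by (metis add.assoc add_left_cancel)
  also have "cnj d * (complex_of_real s * d + complex_of_real r * \<i> * d) = (cnj d * d) * (complex_of_real s + complex_of_real r * \<i>)"
    by (simp add: algebra_simps)
  also have "\<dots> = complex_of_real s + complex_of_real r * \<i>"
    using unit_cnj[OF assms(1)] by simp
  finally have "complex_of_real s + complex_of_real r * \<i> = complex_of_real t * (cnj d * d')"
    by (simp add: algebra_simps)
  then have "Im (complex_of_real s + complex_of_real r * \<i>) = Im (complex_of_real t * (cnj d * d'))"
    by simp
  then show ?thesis by (simp add: cross_def)
qed

lemma cross_self: "cross d d = 0"
  by (simp add: cross_def)

lemma cross_swap: "cross d2 d1 = - cross d1 d2"
  by (simp add: cross_def algebra_simps)

lemma inner_eq: "(d1::complex) \<bullet> d2 = Re (cnj d1 * d2)"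
  by (simp add: inner_complex_def)

lemma inters_intro:
  "(B, db, lb) \<in> fold_boundary_pieces v d1 d2 w \<Longrightarrow> (K, dk, lk) \<in> fold_knot_pieces v d1 d2
   \<Longrightarrow> p \<in> B \<Longrightarrow> p \<in> K \<Longrightarrow> p \<in> fold_intersections v d1 d2 w"
  unfolding fold_intersections_def by blast

lemma inters_elim:
  "p \<in> fold_intersections v d1 d2 w \<Longrightarrow> \<exists>B db lb K dk lk. (B, db, lb) \<in> fold_boundary_pieces v d1 d2 w \<and> (K, dk, lk) \<in> fold_knot_pieces v d1 d2
   \<and> p \<in> B \<and> p \<in> K"
  unfolding fold_intersections_def by blast

lemma cross_elim:
  "(p, s) \<in> fold_crossings v d1 d2 w underfold \<Longrightarrow> \<exists>B db lb K dk lk. (B, db, lb) \<in> fold_boundary_pieces v d1 d2 w \<and> (K, dk, lk) \<in> fold_knot_pieces v d1 d2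
   \<and> p \<in> B \<and> p \<in> K \<and> s = (if layer_above underfold lb lk then crossing_sign db dk else crossing_sign dk db)"
  unfolding fold_crossings_def by blast

theorem lemma4p1:
  fixes v d1 d2 :: complex and w :: real and underfold :: bool
  assumes "w > 0" and "norm d1 = 1" and "norm d2 = 1"
    and "0 < fold_angle d1 d2" and "fold_angle d1 d2 < pi"
  shows "card (fold_intersections v d1 d2 w) = 2 \<and>
    (\<forall>(p, s) \<in> fold_crossings v d1 d2 w underfold.
        (left_fold d1 d2 \<and> underfold \<longrightarrow> s = 1) \<and>
        (left_fold d1 d2 \<and> \<not> underfold \<longrightarrow> s = -1) \<and>
        (right_fold d1 d2 \<and> underfold \<longrightarrow> s = -1) \<and>
        (right_fold d1 d2 \<and> \<not> underfold \<longrightarrow> s = 1))"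
proof -
  define c where "c = d1 \<bullet> d2"
  define k where "k = cross d1 d2"
  have ca: "fold_angle d1 d2 = arccos (- c)"
    unfolding fold_angle_def c_def by simp
  have c1: "c \<noteq> 1" using assms(5) ca by auto
  have c2: "c \<noteq> -1" using assms(4) ca by auto
  have cle: "c \<le> 1" unfolding c_def
    using norm_cauchy_schwarz[of d1 d2] assms by simp
  have cge: "c \<ge> -1" unfolding c_def
    using norm_cauchy_schwarz[of "-d1" d2] assms by simp
  have "c^2 + k^2 = (norm (cnj d1 * d2))^2"
    unfolding c_def k_def cross_def inner_eq by (simp add: cmod_power2)
  also have "\<dots> = 1" using assms by (simp add: norm_mult)
  finally have ck: "c^2 + k^2 = 1" .
  have "c^2 < 1" using c1 c2 cle cge
    by (simp add: abs_square_less_1)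
  hence k0: "k \<noteq> 0" using ck by auto
  define T where "T = w / (2 * \<bar>k\<bar>)"
  have T0: "T > 0" using k0 assms(1) unfolding T_def by auto
  define P1 where "P1 = v + complex_of_real T * d2"
  define P2 where "P2 = v - complex_of_real T * d1"
  have key: "(lb = InLayer \<and> lk = OutLayer \<and> db = d1 \<and> dk = d2 \<and> p = P1) \<or>
             (lb = OutLayer \<and> lk = InLayer \<and> db = d2 \<and> dk = d1 \<and> p = P2)"
    if B: "(B, db, lb) \<in> fold_boundary_pieces v d1 d2 w"
      and K: "(K, dk, lk) \<in> fold_knot_pieces v d1 d2" and pB: "p \<in> B" and pK: "p \<in> K"
    for B db lb K dk lk p
  proof -
    have offs: "\<And>r t. (r = w/2 \<or> r = -w/2) \<Longrightarrow> t \<ge> 0 \<Longrightarrow> r = t * k \<Longrightarrow> t = T"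
    proof -
      fix r t :: real
      assume rr: "r = w/2 \<or> r = -w/2" and "t \<ge> 0" "r = t * k"
      from rr have "\<bar>r\<bar> = w/2" using assms(1) by linarith
      moreover have "\<bar>r\<bar> = t * \<bar>k\<bar>" using \<open>r = t * k\<close> \<open>t \<ge> 0\<close> by (simp add: abs_mult)
      ultimately show "t = T" unfolding T_def using k0 by (simp add: field_simps)
    qed
    from B consider
        (a1) r where "B = parallel_line v d1 r \<inter> ribbon_side v d1 d2" "db = d1" "lb = InLayer" "r = w/2 \<or> r = -w/2"
      | (a2) r where "B = parallel_line v d2 r \<inter> ribbon_side v d1 d2" "db = d2" "lb = OutLayer" "r = w/2 \<or> r = -w/2"
      unfolding fold_boundary_pieces_def insert_iff prod.inject empty_iff by (elim disjE conjE) blast+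
    then show ?thesis
    proof cases
      case a1
      from pB a1(1) have "p \<in> parallel_line v d1 r" by simp
      then obtain s where ps: "p = v + complex_of_real s * d1 + complex_of_real r * \<i> * d1"
        unfolding parallel_line_def by blast
      from K consider "K = in_edge v d1" "dk = d1" "lk = InLayer" | "K = out_edge v d2" "dk = d2" "lk = OutLayer"
        unfolding fold_knot_pieces_def insert_iff prod.inject empty_iff by (elim disjE conjE) blast+
      then show ?thesis
      proof cases
        case 1
        have "p \<in> in_edge v d1" using pK 1(1) by simp
        then obtain t where "p = v - complex_of_real t * d1" unfolding in_edge_def by blast
        then have "v + complex_of_real s * d1 + complex_of_real r * \<i> * d1 = v + complex_of_real (-t) * d1"
          using ps by simp
        from meet[OF assms(2) this] have "r = 0" by (simp add: cross_self)
        then show ?thesis using a1(4) assms(1) by auto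
      next
        case 2
        have "p \<in> out_edge v d2" using pK 2(1) by simp
        then obtain t where t: "p = v + complex_of_real t * d2" "t \<ge> 0" unfolding out_edge_def by blast
        have "v + complex_of_real s * d1 + complex_of_real r * \<i> * d1 = v + complex_of_real t * d2"
          using ps t(1) by simp
        from meet[OF assms(2) this] have "r = t * k" unfolding k_def .
        have "t = T" by (rule offs[OF a1(4) t(2) \<open>r = t * k\<close>])
        then show ?thesis using a1(2,3) 2(2,3) t(1) unfolding P1_def by simp
      qed
    next
      case a2
      from pB a2(1) have "p \<in> parallel_line v d2 r" by simp
      then obtain s where ps: "p = v + complex_of_real s * d2 + complex_of_real r * \<i> * d2"
        unfolding parallel_line_def by blast
      from K consider "K = in_edge v d1" "dk = d1" "lk = InLayer" | "K = out_edge v d2" "dk = d2" "lk = OutLayer"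
        unfolding fold_knot_pieces_def insert_iff prod.inject empty_iff by (elim disjE conjE) blast+
      then show ?thesis
      proof cases
        case 2
        have "p \<in> out_edge v d2" using pK 2(1) by simp
        then obtain t where t: "p = v + complex_of_real t * d2" unfolding out_edge_def by blast
        have "v + complex_of_real s * d2 + complex_of_real r * \<i> * d2 = v + complex_of_real t * d2"
          using ps t(1) by simp
        from meet[OF assms(3) this] have "r = 0" by (simp add: cross_self)
        then show ?thesis using a2(4) assms(1) by auto
      next
        case 1
        have "p \<in> in_edge v d1" using pK 1(1) by simp
        then obtain t where t: "p = v - complex_of_real t * d1" "t \<ge> 0" unfolding in_edge_def by blast
        then have "v + complex_of_real s * d2 + complex_of_real r * \<i> * d2 = v + complex_of_real (-t) * d1"
          using ps by simp
        from meet[OF assms(3) this] have "r = t * k" using cross_swap[of d2 d1] unfolding k_def by simp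
        have "t = T" by (rule offs[OF a2(4) t(2) \<open>r = t * k\<close>])
        then show ?thesis using a2(2,3) 1(2,3) t(1) unfolding P2_def by simp
      qed
    qed
  qed
  have d22: "d2 \<bullet> d2 = 1" using assms(3) by (simp add: power2_norm_eq_inner[symmetric])
  have d11: "d1 \<bullet> d1 = 1" using assms(2) by (simp add: power2_norm_eq_inner[symmetric])
  have rs1: "P1 \<in> ribbon_side v d1 d2"
  proof -
    have "(P1 - v) \<bullet> (d2 - d1) = T * (1 - c)"
    proof -
      have "P1 - v = T *\<^sub>R d2" unfolding P1_def by (simp add: scaleR_conv_of_real)
      then have "(P1 - v) \<bullet> (d2 - d1) = T * (d2 \<bullet> d2 - d2 \<bullet> d1)"
        by (simp add: inner_diff_right algebra_simps)
      then show ?thesis using d22 unfolding c_def by (simp add: inner_commute)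
    qed
    then show ?thesis unfolding ribbon_side_def using T0 cle by simp
  qed
  have rs2: "P2 \<in> ribbon_side v d1 d2"
  proof -
    have "(P2 - v) \<bullet> (d2 - d1) = T * (1 - c)"
    proof -
      have "P2 - v = (-T) *\<^sub>R d1" unfolding P2_def by (simp add: scaleR_conv_of_real)
      moreover have "((-T) *\<^sub>R d1) \<bullet> (d2 - d1) = -T * (d1 \<bullet> d2 - d1 \<bullet> d1)"
        by (simp add: inner_diff_right algebra_simps)
      ultimately have "(P2 - v) \<bullet> (d2 - d1) = -T * (d1 \<bullet> d2 - d1 \<bullet> d1)" by simp
      then show ?thesis using d11 unfolding c_def by (simp add: algebra_simps)
    qed
    then show ?thesis unfolding ribbon_side_def using T0 cle by simp
  qed
  define r where "r = T * k"
  have oo: "r = w/2 \<or> r = -w/2"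
  proof (cases "k > 0")
    case True then show ?thesis unfolding r_def T_def by simp
  next
    case False then have "k < 0" using k0 by simp
    then show ?thesis unfolding r_def T_def by simp
  qed
  have z: "cnj d1 * d2 = complex_of_real c + complex_of_real k * \<i>"
    unfolding c_def k_def inner_eq cross_def by (simp add: complex_eq_iff)
  have l1: "P1 \<in> parallel_line v d1 r"
  proof -
    have "complex_of_real T * d2 = complex_of_real T * (d1 * (cnj d1 * d2))"
      using unit_cnj[OF assms(2)] by (simp add: algebra_simps)
    also have "\<dots> = complex_of_real (T*c) * d1 + complex_of_real r * \<i> * d1"
      unfolding z r_def by (simp add: algebra_simps)
    finally have "P1 = v + complex_of_real (T*c) * d1 + complex_of_real r * \<i> * d1"
      unfolding P1_def by (simp add: add.assoc)
    then show ?thesis unfolding parallel_line_def by blast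
  qed
  have l2: "P2 \<in> parallel_line v d2 r"
  proof -
    have zz: "cnj d2 * d1 = complex_of_real c - complex_of_real k * \<i>"
      using arg_cong[OF z, of cnj] by (simp add: mult.commute)
    have "- complex_of_real T * d1 = - complex_of_real T * (d2 * (cnj d2 * d1))"
      using unit_cnj[OF assms(3)] by (simp add: algebra_simps)
    also have "\<dots> = complex_of_real (-T*c) * d2 + complex_of_real r * \<i> * d2"
      unfolding zz r_def by (simp add: algebra_simps)
    finally have "P2 = v + complex_of_real (-T*c) * d2 + complex_of_real r * \<i> * d2"
      unfolding P2_def by (simp add: add.assoc)
    then show ?thesis unfolding parallel_line_def by blast
  qed
  have e1: "P1 \<in> out_edge v d2" unfolding out_edge_def P1_def using T0 by auto
  have e2: "P2 \<in> in_edge v d1" unfolding in_edge_def P2_def using T0 by auto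
  have bp1: "(parallel_line v d1 r \<inter> ribbon_side v d1 d2, d1, InLayer) \<in> fold_boundary_pieces v d1 d2 w"
    using oo by (elim disjE) (simp_all only: fold_boundary_pieces_def insert_iff simp_thms prod.inject)
  have bp2: "(parallel_line v d2 r \<inter> ribbon_side v d1 d2, d2, OutLayer) \<in> fold_boundary_pieces v d1 d2 w"
    using oo by (elim disjE) (simp_all only: fold_boundary_pieces_def insert_iff simp_thms prod.inject)
  have kp1: "(out_edge v d2, d2, OutLayer) \<in> fold_knot_pieces v d1 d2"
    and kp2: "(in_edge v d1, d1, InLayer) \<in> fold_knot_pieces v d1 d2"
    by (simp_all only: fold_knot_pieces_def insert_iff simp_thms prod.inject)
  have "fold_intersections v d1 d2 w = {P1, P2}"
  proof
    show "fold_intersections v d1 d2 w \<subseteq> {P1, P2}"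
    proof
      fix p assume "p \<in> fold_intersections v d1 d2 w"
      then obtain B db lb K dk lk where "(B, db, lb) \<in> fold_boundary_pieces v d1 d2 w"
          "(K, dk, lk) \<in> fold_knot_pieces v d1 d2" "p \<in> B" "p \<in> K"
        by (blast dest: inters_elim)
      from key[OF this] have "p = P1 \<or> p = P2" by blast
      then show "p \<in> {P1, P2}" by blast
    qed
    show "{P1, P2} \<subseteq> fold_intersections v d1 d2 w"
    proof -
      have "P1 \<in> fold_intersections v d1 d2 w"
        by (rule inters_intro[OF bp1 kp1 IntI[OF l1 rs1] e1])
      moreover have "P2 \<in> fold_intersections v d1 d2 w"
        by (rule inters_intro[OF bp2 kp2 IntI[OF l2 rs2] e2])
      ultimately show ?thesis by simp
    qed
  qed
  moreover have "P1 \<noteq> P2"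
  proof
    assume "P1 = P2"
    then have "complex_of_real T * (d2 + d1) = 0" unfolding P1_def P2_def by (simp add: algebra_simps)
    then have "d2 = - d1" using T0 by (simp add: add_eq_0_iff)
    then have "c = -1" unfolding c_def using d11 by simp
    with c2 show False by simp
  qed
  ultimately have card: "card (fold_intersections v d1 d2 w) = 2" by simp
  have signs: "\<forall>(p, s) \<in> fold_crossings v d1 d2 w underfold.
        (left_fold d1 d2 \<and> underfold \<longrightarrow> s = 1) \<and>
        (left_fold d1 d2 \<and> \<not> underfold \<longrightarrow> s = -1) \<and>
        (right_fold d1 d2 \<and> underfold \<longrightarrow> s = -1) \<and>
        (right_fold d1 d2 \<and> \<not> underfold \<longrightarrow> s = 1)"
  proof (clarify)
    fix p s
    assume "(p, s) \<in> fold_crossings v d1 d2 w underfold"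
    then obtain B db lb K dk lk where
      h: "(B, db, lb) \<in> fold_boundary_pieces v d1 d2 w" "(K, dk, lk) \<in> fold_knot_pieces v d1 d2"
         "p \<in> B" "p \<in> K"
         "s = (if layer_above underfold lb lk then crossing_sign db dk else crossing_sign dk db)"
      by (blast dest: cross_elim)
    have kk: "cross d2 d1 = - k" unfolding k_def by (rule cross_swap)
    have sk: "s = (if underfold then sgn k else - sgn k)"
      using key[OF h(1-4)]
    proof (elim disjE conjE)
      assume "lb = InLayer" "lk = OutLayer" "db = d1" "dk = d2"
      then show ?thesis using h(5) kk unfolding crossing_sign_def layer_above_def k_def
        by (simp add: sgn_minus)
    next
      assume "lb = OutLayer" "lk = InLayer" "db = d2" "dk = d1"
      then show ?thesis using h(5) kk unfolding crossing_sign_def layer_above_def k_def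
        by (simp add: sgn_minus)
    qed
    show "(left_fold d1 d2 \<and> underfold \<longrightarrow> s = 1) \<and>
        (left_fold d1 d2 \<and> \<not> underfold \<longrightarrow> s = -1) \<and>
        (right_fold d1 d2 \<and> underfold \<longrightarrow> s = -1) \<and>
        (right_fold d1 d2 \<and> \<not> underfold \<longrightarrow> s = 1)"
      unfolding left_fold_def right_fold_def k_def[symmetric] sk by simp
  qed
  show ?thesis using card signs by blast
qed

end
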